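(* Let $d\ge2$, let $p_1,\dots,p_{d+1}$ be the vertices of a regular $d$-simplex inscribed in the unit sphere centered at the origin, and for each $i$ let $q_i$ be the point on the ray from the origin through the circumcenter of the facet opposite $p_i$ at distance $\rho>20d$ from the origin. Let $\mathcal Q=\{p_1,\dots,p_{d+1},q_1,\dots,q_{d+1}\}$, $\mathcal D(\mathcal Q)$ its Delaunay complex and $\mathring{\mathcal D}(\mathcal Q)=\mathcal D(\mathcal Q\cup\{\mathbf 0\})$. Then: (1) $\mathring{\mathcal D}(\mathcal Q)\setminus\mathcal D(\mathcal Q)$ consists of at most $2^{d+1}$ simplices, whose maximum weight is $d/2$ and minimum weight is $1/2$; (2) $\mathcal D(\mathcal Q)\setminus\mathring{\mathcal D}(\mathcal Q)$ consists of a single $d$-simplex, of weight $1$.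
   Context: For a finite set $\mathcal X\subset\mathbb{R}^d$, $\mathrm{Vor}_{\mathcal X}(x)=\{y:|y-x|\le|y-x'|\ \forall x'\in\mathcal X\}$; the Delaunay complex $\mathcal D(\mathcal X)$ consists of all $[x_0,\dots,x_k]$ with $\bigcap_i\mathrm{Vor}_{\mathcal X}(x_i)\ne\emptyset$, with weight $w([x_0,\dots,x_k])=\inf\{s:\bigcap_i(B_s(x_i)\cap\mathrm{Vor}_{\mathcal X}(x_i))\ne\emptyset\}$, computed in the complex containing the simplex. *)

theory Defs
  imports "HOL-Analysis.Analysis"
begin

definition voronoi :: "('a::metric_space) set \<Rightarrow> 'a \<Rightarrow> 'a set" where
  "voronoi X x = {y. \<forall>x'\<in>X. dist y x \<le> dist y x'}"

definition delaunay :: "('a::metric_space) set \<Rightarrow> 'a set set" where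
  "delaunay X = {\<sigma>. \<sigma> \<noteq> {} \<and> \<sigma> \<subseteq> X \<and> (\<Inter>x\<in>\<sigma>. voronoi X x) \<noteq> {}}"

definition del_weight :: "('a::metric_space) set \<Rightarrow> 'a set \<Rightarrow> real" where
  "del_weight X \<sigma> = Inf {s. (\<Inter>x\<in>\<sigma>. cball x s \<inter> voronoi X x) \<noteq> {}}"

definition regular_simplex_unit_sphere :: "(real ^ 'n) set \<Rightarrow> bool" where
  "regular_simplex_unit_sphere P \<longleftrightarrow>
     card P = CARD('n) + 1 \<and> \<not> affine_dependent P \<and> P \<subseteq> sphere 0 1 \<and>
     (\<exists>a. \<forall>x\<in>P. \<forall>y\<in>P. x \<noteq> y \<longrightarrow> dist x y = a)"

definition circumcenter :: "('a::euclidean_space) set \<Rightarrow> 'a" where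
  "circumcenter S = (THE c. c \<in> affine hull S \<and> (\<exists>r. \<forall>x\<in>S. dist c x = r))"

definition ray_point :: "real \<Rightarrow> ('a::euclidean_space) set \<Rightarrow> 'a \<Rightarrow> 'a" where
  "ray_point \<rho> P p = (let c = circumcenter (P - {p}) in (\<rho> / norm c) *\<^sub>R c)"

end

theory Submission
  imports Defs
begin

lemma hull_const:
  fixes v :: "'a::euclidean_space"
  assumes "\<And>x. x \<in> S \<Longrightarrow> v \<bullet> x = k" and "z \<in> affine hull S"
  shows "v \<bullet> z = k"
proof -
  have "affine hull S \<subseteq> {x. v \<bullet> x = k}"
    by (rule hull_minimal) (use assms(1) affine_hyperplane in auto)
  then show ?thesis using assms(2) by auto
qed

lemma Inf_between:
  fixes A :: "real set"
  assumes "\<And>s. s \<in> A \<Longrightarrow> L \<le> s" and "U \<in> A"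
  shows "L \<le> Inf A \<and> Inf A \<le> U"
proof
  show "L \<le> Inf A" using assms by (intro cInf_greatest) auto
  show "Inf A \<le> U" using assms by (intro cInf_lower) (auto simp: bdd_below_def)
qed

locale cfg =
  fixes P :: "(real^'n) set" and \<rho> :: real
  assumes fin: "finite P" and cardP: "card P = CARD('n) + 1"
  and nrm: "\<And>p. p\<in>P \<Longrightarrow> p \<bullet> p = 1"
  and ip: "\<And>p p'. p\<in>P \<Longrightarrow> p'\<in>P \<Longrightarrow> p \<noteq> p' \<Longrightarrow> p \<bullet> p' = -1/real CARD('n)"
  and sum0: "(\<Sum>p\<in>P. p) = 0"
  and d2: "CARD('n) \<ge> 2"
  and rho: "\<rho> > 20 * real CARD('n)"
begin


definition "QQ = P \<union> (\<lambda>p. (-\<rho>) *\<^sub>R p) ` P"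
definition "GG y x = x \<bullet> x - 2 * (y \<bullet> x)"

lemma dd2: "(real CARD('n)) \<ge> 2" using d2 by simp

lemma dist_le: "dist y x \<le> dist y x' \<longleftrightarrow> GG y x \<le> GG y x'"
  unfolding GG_def dist_norm norm_le
  by (simp add: inner_diff_left inner_diff_right inner_commute)

lemma vorG: "y \<in> voronoi S x \<longleftrightarrow> (\<forall>x'\<in>S. GG y x \<le> GG y x')"
  unfolding voronoi_def by (simp add: dist_le)

lemma G0: "GG y 0 = 0" by (simp add: GG_def)
lemma Gp: "p\<in>P \<Longrightarrow> GG y p = 1 - 2*(y \<bullet> p)" by (simp add: GG_def nrm)
lemma Gq: "p\<in>P \<Longrightarrow> GG y ((-\<rho>) *\<^sub>R p) = \<rho>^2 + 2*\<rho>*(y \<bullet> p)"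
  by (simp add: GG_def nrm power2_eq_square)

lemma ipb: "p\<in>P \<Longrightarrow> p'\<in>P \<Longrightarrow> -1/2 \<le> p \<bullet> p' \<and> p \<bullet> p' \<le> 1"
proof -
  assume a: "p\<in>P" "p'\<in>P"
  show ?thesis
  proof (cases "p = p'")
    case True then show ?thesis using nrm a by simp
  next
    case False
    then have "p \<bullet> p' = -(1/(real CARD('n)))" using ip a by simp
    moreover have "1/(real CARD('n)) \<le> 1/2" using dd2 by (simp add: field_simps)
    moreover have "0 \<le> 1/(real CARD('n))" by simp
    ultimately show ?thesis by linarith
  qed
qed

lemma sumip: "(\<Sum>p\<in>P. y \<bullet> p) = 0"
proof -
  have "(\<Sum>p\<in>P. y \<bullet> p) = y \<bullet> (\<Sum>p\<in>P. p)" by (simp add: inner_sum_right)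
  also have "\<dots> = 0" by (simp add: sum0)
  finally show ?thesis .
qed

lemma sumrem: "p0\<in>P \<Longrightarrow> (\<Sum>p\<in>P-{p0}. y \<bullet> p) = -(y \<bullet> p0)"
  using sum.remove[OF fin, of p0 "\<lambda>p. y \<bullet> p"] sumip by simp

lemma cardrem: "p0 \<in> P \<Longrightarrow> card (P - {p0}) = CARD('n)"
  by (simp add: cardP fin)

lemma rho_pos: "\<rho> > 0" using rho dd2 by simp

lemma rho_sq: "\<rho>^2 - \<rho>*(real CARD('n)) > 1 + (real CARD('n))"
proof -
  have "\<rho> - (real CARD('n)) \<ge> 1" using rho dd2 by simp
  then have "\<rho>*(\<rho> - (real CARD('n))) \<ge> \<rho>*1" using rho_pos by (intro mult_left_mono) auto
  then show ?thesis using rho dd2 by (simp add: power2_eq_square algebra_simps)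
qed

lemma Pne0: "p\<in>P \<Longrightarrow> p \<noteq> 0" using nrm by force

lemma zeroQ: "0 \<notin> QQ"
  unfolding QQ_def using Pne0 rho_pos by auto

lemma near:
  assumes "y \<in> voronoi (insert 0 QQ) 0" "p\<in>P"
  shows "y \<bullet> p \<le> 1/2 \<and> -(real CARD('n))/2 \<le> y \<bullet> p"
proof -
  have le: "y \<bullet> p' \<le> 1/2" if "p'\<in>P" for p'
  proof -
    have "p' \<in> insert 0 QQ" using that by (simp add: QQ_def)
    then have "GG y 0 \<le> GG y p'" using assms(1) vorG by blast
    then show ?thesis by (simp add: Gp[OF that] G0)
  qed
  have "(\<Sum>p'\<in>P-{p}. y \<bullet> p') \<le> of_nat (card (P-{p})) * (1/2)"
    by (rule sum_bounded_above) (use le in auto)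
  then show ?thesis using sumrem[OF assms(2)] cardrem[OF assms(2)] le[OF assms(2)] by simp
qed

lemma W:
  assumes "p0\<in>P" "x \<in> insert 0 (P-{p0})"
  shows "(-((real CARD('n))/2)) *\<^sub>R p0 \<in> voronoi (insert 0 QQ) x"
proof -
  define z where "z = (-((real CARD('n))/2)) *\<^sub>R p0"
  have zp: "z \<bullet> p = -((real CARD('n))/2) * (p0 \<bullet> p)" for p by (simp add: z_def)
  have Gx: "GG z x = 0"
  proof (cases "x = 0")
    case True then show ?thesis by (simp add: G0)
  next
    case False
    then have "x \<in> P" "x \<noteq> p0" using assms by auto
    then show ?thesis using Gp[of x z] zp[of x] ip[OF assms(1), of x] dd2 by simp
  qed
  have "GG z x \<le> GG z x'" if hx: "x' \<in> insert 0 QQ" for x'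
  proof -
    consider "x' = 0" | p where "p\<in>P" "x' = p" | p where "p\<in>P" "x' = (-\<rho>) *\<^sub>R p"
    proof -
      have "x' = 0 \<or> x' \<in> P \<or> x' \<in> (\<lambda>p. (-\<rho>) *\<^sub>R p) ` P" using hx unfolding QQ_def by simp
      then show ?thesis
      proof (elim disjE)
        assume "x' = 0" then show ?thesis by (rule that(1))
      next
        assume "x' \<in> P" then show ?thesis using that(2) by blast
      next
        assume "x' \<in> (\<lambda>p. (-\<rho>) *\<^sub>R p) ` P"
        then obtain p where "x' = (-\<rho>) *\<^sub>R p" "p \<in> P" by (rule imageE)
        then show ?thesis using that(3) by blast
      qed
    qed
    then show ?thesis
    proof cases
      case 1 then show ?thesis by (simp add: Gx G0)
    next
      case (2 p)
      show ?thesis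
      proof (cases "p = p0")
        case True
        then show ?thesis using 2 Gp[of p z] zp[of p] nrm[OF assms(1)] Gx dd2 by simp
      next
        case False
        then show ?thesis using 2 Gp[of p z] zp[of p] ip[OF assms(1), of p] Gx dd2 by simp
      qed
    next
      case (3 p)
      have b: "p0 \<bullet> p \<le> 1" using ipb[OF assms(1) 3(1)] by simp
      have "\<rho>*(real CARD('n))*(p0 \<bullet> p) \<le> \<rho>*(real CARD('n))*1" using b rho_pos dd2
        by (intro mult_left_mono) auto
      then have "0 \<le> \<rho>^2 + 2*\<rho>*(z \<bullet> p)" using zp[of p] rho_sq by (simp add: algebra_simps)
      then show ?thesis using 3 Gq[of p z] Gx by simp
    qed
  qed
  then show ?thesis unfolding z_def[symmetric] vorG by blast
qed

lemma vor_mono: "A \<subseteq> B \<Longrightarrow> voronoi B x \<subseteq> voronoi A x"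
  unfolding voronoi_def by auto

lemma D3:
  assumes "S \<subseteq> P" "S \<noteq> P"
  shows "insert 0 S \<in> delaunay (insert 0 QQ)"
proof -
  obtain p0 where p0: "p0 \<in> P" "p0 \<notin> S" using assms by blast
  have "(-((real CARD('n))/2)) *\<^sub>R p0 \<in> (\<Inter>x\<in>insert 0 S. voronoi (insert 0 QQ) x)"
    using W[OF p0(1)] p0 assms(1) by blast
  then show ?thesis unfolding delaunay_def using assms(1) by (auto simp: QQ_def)
qed

lemma D1:
  assumes "\<sigma> \<in> delaunay (insert 0 QQ)" "\<sigma> \<notin> delaunay QQ"
  shows "\<exists>S. S \<subseteq> P \<and> S \<noteq> P \<and> \<sigma> = insert 0 S"
proof -
  have sub: "\<sigma> \<subseteq> insert 0 QQ" and ne: "\<sigma> \<noteq> {}" using assms(1) by (auto simp: delaunay_def)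
  obtain y where y: "\<And>x. x\<in>\<sigma> \<Longrightarrow> y \<in> voronoi (insert 0 QQ) x"
    using assms(1) by (auto simp: delaunay_def)
  have z: "0 \<in> \<sigma>"
  proof (rule ccontr)
    assume "0 \<notin> \<sigma>"
    then have "\<sigma> \<subseteq> QQ" using sub by auto
    moreover have "y \<in> (\<Inter>x\<in>\<sigma>. voronoi QQ x)"
      using y vor_mono[of QQ "insert 0 QQ"] by blast
    ultimately have "\<sigma> \<in> delaunay QQ" using ne by (auto simp: delaunay_def)
    then show False using assms(2) by simp
  qed
  have y0: "y \<in> voronoi (insert 0 QQ) 0" using y z by simp
  have Geq: "GG y x = 0" if "x \<in> \<sigma>" for x
  proof -
    have "GG y x \<le> GG y 0" using y[OF that] vorG by blast
    moreover have "GG y 0 \<le> GG y x" using y0 vorG sub that by blast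
    ultimately show ?thesis using G0 by simp
  qed
  have S: "\<sigma> - {0} \<subseteq> P"
  proof
    fix x assume x: "x \<in> \<sigma> - {0}"
    show "x \<in> P"
    proof (rule ccontr)
      assume "x \<notin> P"
      moreover have "x \<in> QQ" using x sub by auto
      ultimately have "x \<in> (\<lambda>p. (-\<rho>) *\<^sub>R p) ` P" unfolding QQ_def by simp
      then obtain p where p: "x = (-\<rho>) *\<^sub>R p" "p \<in> P" by (rule imageE)
      have "-(real CARD('n))/2 \<le> y \<bullet> p" using near[OF y0 p(2)] by simp
      then have "\<rho>*(-(real CARD('n))) \<le> \<rho>*(2*(y \<bullet> p))" using rho_pos by (intro mult_left_mono) auto
      then have "GG y x \<ge> \<rho>^2 - \<rho>*(real CARD('n))" using Gq[OF p(2), of y] p(1) by (simp add: algebra_simps)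
      then have "GG y x > 0" using rho_sq dd2 by linarith
      then show False using Geq x by simp
    qed
  qed
  have nP: "\<not> P \<subseteq> \<sigma>"
  proof
    assume "P \<subseteq> \<sigma>"
    have "\<forall>p\<in>P. y \<bullet> p = 1/2"
    proof
      fix p assume p: "p \<in> P"
      then have "GG y p = 0" using Geq \<open>P \<subseteq> \<sigma>\<close> by blast
      then show "y \<bullet> p = 1/2" using Gp[OF p, of y] by simp
    qed
    then have "(\<Sum>p\<in>P. y \<bullet> p) = (\<Sum>p\<in>P. 1/2)" by (intro sum.cong) auto
    then show False using sumip cardP by simp
  qed
  have n: "\<sigma> - {0} \<noteq> P" using nP by blast
  have e: "\<sigma> = insert 0 (\<sigma> - {0})" using z by blast
  show ?thesis using S n e by (intro exI[of _ "\<sigma> - {0}"] conjI)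
qed

lemma Dchar: "delaunay (insert 0 QQ) - delaunay QQ = {insert 0 S | S. S \<subseteq> P \<and> S \<noteq> P}"
proof
  show "delaunay (insert 0 QQ) - delaunay QQ \<subseteq> {insert 0 S | S. S \<subseteq> P \<and> S \<noteq> P}"
  proof
    fix \<sigma> assume "\<sigma> \<in> delaunay (insert 0 QQ) - delaunay QQ"
    then obtain S where S: "S \<subseteq> P" "S \<noteq> P" "\<sigma> = insert 0 S" using D1[of \<sigma>] by auto
    show "\<sigma> \<in> {insert 0 S | S. S \<subseteq> P \<and> S \<noteq> P}"
      unfolding mem_Collect_eq using S by (intro exI[of _ S] conjI)
  qed
  show "{insert 0 S | S. S \<subseteq> P \<and> S \<noteq> P} \<subseteq> delaunay (insert 0 QQ) - delaunay QQ"
  proof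
    fix \<sigma> assume "\<sigma> \<in> {insert 0 S | S. S \<subseteq> P \<and> S \<noteq> P}"
    then obtain S where S: "S \<subseteq> P" "S \<noteq> P" "\<sigma> = insert 0 S" by auto
    have "\<sigma> \<notin> delaunay QQ" using zeroQ S(3) unfolding delaunay_def by blast
    then show "\<sigma> \<in> delaunay (insert 0 QQ) - delaunay QQ" using D3[OF S(1,2)] S(3) by simp
  qed
qed

lemma card_part: "card (delaunay (insert 0 QQ) - delaunay QQ) \<le> 2 ^ (CARD('n) + 1)"
proof -
  have "delaunay (insert 0 QQ) - delaunay QQ \<subseteq> insert 0 ` Pow P" unfolding Dchar by blast
  moreover have "finite (insert 0 ` Pow P)" using fin by simp
  ultimately have "card (delaunay (insert 0 QQ) - delaunay QQ) \<le> card (insert 0 ` Pow P)"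
    by (intro card_mono)
  also have "\<dots> \<le> card (Pow P)" using fin by (intro card_image_le) simp
  also have "\<dots> = 2 ^ (CARD('n) + 1)" using fin cardP by (simp add: card_Pow)
  finally show ?thesis .
qed

definition "wset X \<sigma> = {s. (\<Inter>x\<in>\<sigma>. cball x s \<inter> voronoi X x) \<noteq> {}}"

lemma dw: "del_weight X \<sigma> = Inf (wset X \<sigma>)"
  unfolding del_weight_def wset_def by simp

lemma wsetE:
  assumes "s \<in> wset X \<sigma>"
  obtains y where "\<And>x. x \<in> \<sigma> \<Longrightarrow> dist x y \<le> s \<and> y \<in> voronoi X x"
proof -
  from assms obtain y where "y \<in> (\<Inter>x\<in>\<sigma>. cball x s \<inter> voronoi X x)" unfolding wset_def by blast
  then show thesis by (intro that[of y]) auto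
qed

lemma wsetI:
  assumes "\<And>x. x \<in> \<sigma> \<Longrightarrow> dist x y \<le> s \<and> y \<in> voronoi X x"
  shows "s \<in> wset X \<sigma>"
proof -
  have "y \<in> (\<Inter>x\<in>\<sigma>. cball x s \<inter> voronoi X x)" using assms by auto
  then show ?thesis unfolding wset_def by blast
qed

lemma norm1: "p \<in> P \<Longrightarrow> norm p = 1"
  using nrm by (simp add: norm_eq_sqrt_inner)

lemma w_lower:
  assumes "S \<subseteq> P" "p \<in> S" "s \<in> wset (insert 0 QQ) (insert 0 S)"
  shows "1/2 \<le> s"
proof -
  obtain y where y: "\<And>x. x \<in> insert 0 S \<Longrightarrow> dist x y \<le> s \<and> y \<in> voronoi (insert 0 QQ) x"
    using wsetE[OF assms(3)] by blast
  have pP: "p \<in> P" using assms by auto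
  have pX: "p \<in> insert 0 QQ" using pP by (simp add: QQ_def)
  have "GG y 0 \<le> GG y p" using y[of 0] pX vorG by blast
  moreover have "GG y p \<le> GG y 0" using y[of p] assms(2) vorG by blast
  ultimately have e: "y \<bullet> p = 1/2" by (simp add: Gp[OF pP] G0)
  have "\<bar>y \<bullet> p\<bar> \<le> norm y * norm p" by (rule Cauchy_Schwarz_ineq2)
  then have "1/2 \<le> norm y" using e norm1[OF pP] by simp
  moreover have "norm y \<le> s" using y[of 0] by simp
  ultimately show ?thesis by simp
qed

lemma w_lower2:
  assumes "p0 \<in> P" "s \<in> wset (insert 0 QQ) (insert 0 (P - {p0}))"
  shows "real CARD('n)/2 \<le> s"
proof -
  obtain y where y: "\<And>x. x \<in> insert 0 (P - {p0}) \<Longrightarrow> dist x y \<le> s \<and> y \<in> voronoi (insert 0 QQ) x"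
    using wsetE[OF assms(2)] by blast
  have e: "y \<bullet> p = 1/2" if p: "p \<in> P - {p0}" for p
  proof -
    have pP: "p \<in> P" using p by simp
    have pX: "p \<in> insert 0 QQ" using pP by (simp add: QQ_def)
    have "GG y 0 \<le> GG y p" using y[of 0] pX vorG by blast
    moreover have "GG y p \<le> GG y 0" using y[of p] p vorG by blast
    ultimately show ?thesis by (simp add: Gp[OF pP] G0)
  qed
  have "(\<Sum>p\<in>P-{p0}. y \<bullet> p) = (\<Sum>p\<in>P-{p0}. 1/2)" using e by (intro sum.cong) auto
  then have e0: "y \<bullet> p0 = - (real CARD('n)/2)"
    using sumrem[OF assms(1), of y] cardrem[OF assms(1)] by simp
  have "\<bar>y \<bullet> p0\<bar> \<le> norm y * norm p0" by (rule Cauchy_Schwarz_ineq2)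
  then have "real CARD('n)/2 \<le> norm y" using e0 norm1[OF assms(1)] by simp
  moreover have "norm y \<le> s" using y[of 0] by simp
  ultimately show ?thesis by simp
qed

lemma w_upper:
  assumes "p0 \<in> P" "S \<subseteq> P - {p0}"
  shows "real CARD('n)/2 \<in> wset (insert 0 QQ) (insert 0 S)"
proof (rule wsetI)
  fix x assume x: "x \<in> insert 0 S"
  define z where "z = (-(real CARD('n)/2)) *\<^sub>R p0"
  have xx: "x \<in> insert 0 (P - {p0})" using x assms(2) by auto
  have v: "z \<in> voronoi (insert 0 QQ) x" unfolding z_def by (rule W[OF assms(1) xx])
  have "dist z x \<le> dist z 0" using v unfolding voronoi_def by simp
  also have "\<dots> = real CARD('n)/2" using norm1[OF assms(1)] by (simp add: z_def)
  finally show "dist x z \<le> real CARD('n)/2 \<and> z \<in> voronoi (insert 0 QQ) x"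
    using v by (simp add: dist_commute)
qed

lemma w_half:
  assumes "p \<in> P"
  shows "1/2 \<in> wset (insert 0 QQ) {0, p}"
proof (rule wsetI)
  fix x assume x: "x \<in> {0, p}"
  define z where "z = (1/2) *\<^sub>R p"
  have zp: "z \<bullet> p' = (1/2) * (p \<bullet> p')" for p' by (simp add: z_def)
  have Gx: "GG z x = 0"
    using x Gp[OF assms, of z] zp[of p] nrm[OF assms] G0 by auto
  have "GG z x \<le> GG z x'" if hx: "x' \<in> insert 0 QQ" for x'
  proof -
    have "x' = 0 \<or> x' \<in> P \<or> x' \<in> (\<lambda>p. (-\<rho>) *\<^sub>R p) ` P" using hx unfolding QQ_def by simp
    then show ?thesis
    proof (elim disjE)
      assume "x' = 0" then show ?thesis by (simp add: Gx G0)
    next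
      assume h: "x' \<in> P"
      then have "p \<bullet> x' \<le> 1" using ipb[OF assms h] by simp
      then show ?thesis using Gp[OF h, of z] zp[of x'] Gx by simp
    next
      assume "x' \<in> (\<lambda>p. (-\<rho>) *\<^sub>R p) ` P"
      then obtain q where q: "x' = (-\<rho>) *\<^sub>R q" "q \<in> P" by (rule imageE)
      have b: "-1/2 \<le> p \<bullet> q" using ipb[OF assms q(2)] by simp
      have "\<rho>*(-1/2) \<le> \<rho>*(p \<bullet> q)" using b rho_pos by (intro mult_left_mono) auto
      moreover have "\<rho> \<le> \<rho>^2" using rho dd2 by (simp add: power2_eq_square)
      ultimately have "0 \<le> \<rho>^2 + \<rho>*(p \<bullet> q)" using rho_pos by linarith
      moreover have "2*\<rho>*(z \<bullet> q) = \<rho>*(p \<bullet> q)" using zp[of q] by (simp add: algebra_simps)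
      ultimately have "0 \<le> \<rho>^2 + 2*\<rho>*(z \<bullet> q)" by linarith
      then show ?thesis using q Gq[OF q(2), of z] Gx by simp
    qed
  qed
  then have v: "z \<in> voronoi (insert 0 QQ) x" unfolding vorG by blast
  have "dist z x \<le> dist z 0" using v unfolding voronoi_def by simp
  also have "\<dots> = 1/2" using norm1[OF assms] by (simp add: z_def)
  finally show "dist x z \<le> 1/2 \<and> z \<in> voronoi (insert 0 QQ) x"
    using v by (simp add: dist_commute)
qed

lemma finDX: "finite (delaunay (insert 0 QQ))"
proof -
  have "delaunay (insert 0 QQ) \<subseteq> Pow (insert 0 QQ)" unfolding delaunay_def by blast
  moreover have "finite (Pow (insert 0 QQ))" using fin by (simp add: QQ_def)
  ultimately show ?thesis by (rule finite_subset)
qed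

lemma notDQ: "0 \<in> \<sigma> \<Longrightarrow> \<sigma> \<notin> delaunay QQ"
  using zeroQ unfolding delaunay_def by blast

lemma weights:
  defines "A \<equiv> {\<sigma> \<in> delaunay (insert 0 QQ) - delaunay QQ. card \<sigma> \<ge> 2}"
  shows "Max (del_weight (insert 0 QQ) ` A) = real CARD('n) / 2 \<and>
         Min (del_weight (insert 0 QQ) ` A) = 1/2"
proof -
  have finA: "finite (del_weight (insert 0 QQ) ` A)"
    using finDX unfolding A_def by simp
  have bnd: "1/2 \<le> del_weight (insert 0 QQ) \<sigma> \<and> del_weight (insert 0 QQ) \<sigma> \<le> real CARD('n)/2"
    if s: "\<sigma> \<in> A" for \<sigma>
  proof -
    have "\<sigma> \<in> delaunay (insert 0 QQ) - delaunay QQ" using s unfolding A_def by simp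
    then have "\<sigma> \<in> {insert 0 S | S. S \<subseteq> P \<and> S \<noteq> P}" unfolding Dchar .
    then obtain S where S: "S \<subseteq> P" "S \<noteq> P" "\<sigma> = insert 0 S" by auto
    have "S \<noteq> {}"
    proof
      assume "S = {}"
      then have "card \<sigma> = 1" using S by simp
      then show False using s unfolding A_def by simp
    qed
    then obtain p where p: "p \<in> S" by blast
    obtain p0 where p0: "p0 \<in> P" "p0 \<notin> S" using S by blast
    have S0: "S \<subseteq> P - {p0}" using S(1) p0(2) by blast
    have "1/2 \<le> Inf (wset (insert 0 QQ) (insert 0 S)) \<and> Inf (wset (insert 0 QQ) (insert 0 S)) \<le> real CARD('n)/2"
      by (rule Inf_between[OF w_lower[OF S(1) p] w_upper[OF p0(1) S0]])
    then show ?thesis by (simp add: dw S(3))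
  qed
  have "P \<noteq> {}" using cardP by auto
  then obtain p1 where p1: "p1 \<in> P" by blast
  have c3: "card P \<ge> 3" using cardP d2 by simp
  have m1: "{0, p1} \<in> A"
  proof -
    have ne: "{p1} \<noteq> P" using c3 by auto
    have "insert 0 {p1} \<in> delaunay (insert 0 QQ)" by (rule D3) (use p1 ne in auto)
    moreover have "insert 0 {p1} \<notin> delaunay QQ" by (rule notDQ) simp
    moreover have "card {0, p1} = 2" using Pne0[OF p1] by simp
    ultimately show ?thesis unfolding A_def by simp
  qed
  have m2: "insert 0 (P - {p1}) \<in> A"
  proof -
    have ne: "P - {p1} \<noteq> P" using p1 by auto
    have "insert 0 (P - {p1}) \<in> delaunay (insert 0 QQ)" by (rule D3) (use ne in auto)
    moreover have "insert 0 (P - {p1}) \<notin> delaunay QQ" by (rule notDQ) simp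
    moreover have "card (insert 0 (P - {p1})) = CARD('n) + 1"
    proof -
      have "0 \<notin> P - {p1}" using Pne0 by blast
      then show ?thesis using cardrem[OF p1] fin by (simp add: card_insert_if)
    qed
    ultimately show ?thesis unfolding A_def using d2 by simp
  qed
  have wm1: "del_weight (insert 0 QQ) {0, p1} = 1/2"
    unfolding dw
    by (rule cInf_eq_minimum[OF w_half[OF p1]]) (rule w_lower[of "{p1}" p1], use p1 in auto)
  have wm2: "del_weight (insert 0 QQ) (insert 0 (P - {p1})) = real CARD('n)/2"
    unfolding dw
    by (rule cInf_eq_minimum[OF w_upper[OF p1 subset_refl]]) (rule w_lower2[OF p1])
  have i1: "real CARD('n)/2 \<in> del_weight (insert 0 QQ) ` A" using m2 wm2 by (metis image_eqI)
  have i2: "1/2 \<in> del_weight (insert 0 QQ) ` A" using m1 wm1 by (metis image_eqI)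
  have "Max (del_weight (insert 0 QQ) ` A) = real CARD('n) / 2"
  proof (rule Max_eqI[OF finA])
    fix w assume "w \<in> del_weight (insert 0 QQ) ` A"
    then obtain \<sigma> where "\<sigma> \<in> A" "w = del_weight (insert 0 QQ) \<sigma>" by (rule imageE) simp
    then show "w \<le> real CARD('n) / 2" using bnd by simp
  qed (rule i1)
  moreover have "Min (del_weight (insert 0 QQ) ` A) = 1/2"
  proof (rule Min_eqI[OF finA])
    fix w assume "w \<in> del_weight (insert 0 QQ) ` A"
    then obtain \<sigma> where "\<sigma> \<in> A" "w = del_weight (insert 0 QQ) \<sigma>" by (rule imageE) simp
    then show "1/2 \<le> w" using bnd by simp
  qed (rule i2)
  ultimately show ?thesis by simp
qed

lemma zero_vor: "p \<in> P \<Longrightarrow> 0 \<in> voronoi QQ p"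
proof -
  have "GG 0 p \<le> GG 0 x'" if p: "p \<in> P" and hx: "x' \<in> QQ" for p x'
  proof -
    have "x' \<in> P \<or> x' \<in> (\<lambda>p. (-\<rho>) *\<^sub>R p) ` P" using hx unfolding QQ_def by simp
    then show ?thesis
    proof (elim disjE)
      assume "x' \<in> P" then show ?thesis using Gp[OF p, of 0] Gp[of x' 0] by simp
    next
      assume "x' \<in> (\<lambda>p. (-\<rho>) *\<^sub>R p) ` P"
      then obtain q where q: "x' = (-\<rho>) *\<^sub>R q" "q \<in> P" by (rule imageE)
      have r1: "1 \<le> \<rho>" using rho dd2 by simp
      have "1*1 \<le> \<rho>*\<rho>" using r1 by (intro mult_mono) auto
      then have "1 \<le> \<rho>^2" by (simp add: power2_eq_square)
      then show ?thesis using q Gq[OF q(2), of 0] Gp[OF p, of 0] by simp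
    qed
  qed
  then show "p \<in> P \<Longrightarrow> 0 \<in> voronoi QQ p" unfolding vorG by blast
qed

lemma PinDQ: "P \<in> delaunay QQ"
proof -
  have "0 \<in> (\<Inter>x\<in>P. voronoi QQ x)" using zero_vor by blast
  moreover have "P \<noteq> {}" using cardP by auto
  ultimately show ?thesis unfolding delaunay_def QQ_def by blast
qed

lemma PnotDX: "P \<notin> delaunay (insert 0 QQ)"
proof
  assume "P \<in> delaunay (insert 0 QQ)"
  then obtain y where y: "\<And>x. x \<in> P \<Longrightarrow> y \<in> voronoi (insert 0 QQ) x"
    unfolding delaunay_def by blast
  have "1/2 \<le> y \<bullet> p" if p: "p \<in> P" for p
  proof -
    have "GG y p \<le> GG y 0" using y[OF p] vorG by blast
    then show ?thesis by (simp add: Gp[OF p] G0)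
  qed
  then have "(\<Sum>p\<in>P. 1/2) \<le> (\<Sum>p\<in>P. y \<bullet> p)" by (intro sum_mono) auto
  then show False using sumip cardP by simp
qed

lemma D2:
  assumes "\<sigma> \<in> delaunay QQ" "\<sigma> \<notin> delaunay (insert 0 QQ)"
  shows "\<sigma> = P"
proof -
  have sub: "\<sigma> \<subseteq> QQ" and ne: "\<sigma> \<noteq> {}" using assms(1) by (auto simp: delaunay_def)
  obtain y where y: "\<And>x. x\<in>\<sigma> \<Longrightarrow> y \<in> voronoi QQ x"
    using assms(1) unfolding delaunay_def by blast
  obtain x0 where x0: "x0 \<in> \<sigma>" using ne by blast
  have mut: "GG y x = GG y x0" if x: "x \<in> \<sigma>" for x
  proof -
    have "GG y x \<le> GG y x0" using y[OF x] x0 sub vorG by blast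
    moreover have "GG y x0 \<le> GG y x" using y[OF x0] x sub vorG by blast
    ultimately show ?thesis by simp
  qed
  have pos: "GG y x0 > 0"
  proof (rule ccontr)
    assume "\<not> GG y x0 > 0"
    then have "y \<in> voronoi (insert 0 QQ) x" if x: "x \<in> \<sigma>" for x
    proof -
      have "\<forall>x'\<in>QQ. GG y x \<le> GG y x'" using y[OF x] unfolding vorG .
      moreover have "GG y x \<le> GG y 0" using mut[OF x] \<open>\<not> GG y x0 > 0\<close> by (simp add: G0)
      ultimately show ?thesis unfolding vorG by blast
    qed
    then have "y \<in> (\<Inter>x\<in>\<sigma>. voronoi (insert 0 QQ) x)" by blast
    then have "\<sigma> \<in> delaunay (insert 0 QQ)" using sub ne unfolding delaunay_def by blast
    then show False using assms(2) by simp
  qed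
  have y0: "y \<in> voronoi (insert 0 QQ) 0"
    unfolding vorG
  proof
    fix x' assume "x' \<in> insert 0 QQ"
    then show "GG y 0 \<le> GG y x'"
    proof
      assume "x' = 0" then show ?thesis by simp
    next
      assume "x' \<in> QQ"
      then have "GG y x0 \<le> GG y x'" using y[OF x0] vorG by blast
      then show ?thesis using pos by (simp add: G0)
    qed
  qed
  have "P \<noteq> {}" using cardP by auto
  then obtain p1 where p1: "p1 \<in> P" by blast
  have S: "\<sigma> \<subseteq> P"
  proof
    fix x assume x: "x \<in> \<sigma>"
    show "x \<in> P"
    proof (rule ccontr)
      assume "x \<notin> P"
      moreover have "x \<in> QQ" using x sub by auto
      ultimately have "x \<in> (\<lambda>p. (-\<rho>) *\<^sub>R p) ` P" unfolding QQ_def by simp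
      then obtain p where p: "x = (-\<rho>) *\<^sub>R p" "p \<in> P" by (rule imageE)
      have "-(real CARD('n))/2 \<le> y \<bullet> p" using near[OF y0 p(2)] by simp
      then have "\<rho>*(-(real CARD('n))) \<le> \<rho>*(2*(y \<bullet> p))" using rho_pos by (intro mult_left_mono) auto
      then have a: "GG y x \<ge> \<rho>^2 - \<rho>*(real CARD('n))" using Gq[OF p(2), of y] p(1) by (simp add: algebra_simps)
      have "-(real CARD('n))/2 \<le> y \<bullet> p1" using near[OF y0 p1] by simp
      then have b: "GG y p1 \<le> 1 + real CARD('n)" using Gp[OF p1, of y] by simp
      have "p1 \<in> QQ" using p1 by (simp add: QQ_def)
      then have "GG y x \<le> GG y p1" using y[OF x] unfolding vorG by blast
      then show False using a b rho_sq by linarith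
    qed
  qed
  show ?thesis
  proof (rule ccontr)
    assume "\<sigma> \<noteq> P"
    then obtain p0 where p0: "p0 \<in> P" "p0 \<notin> \<sigma>" using S by blast
    have "(-(real CARD('n)/2)) *\<^sub>R p0 \<in> (\<Inter>x\<in>\<sigma>. voronoi (insert 0 QQ) x)"
      using W[OF p0(1)] p0(2) S by blast
    then have "\<sigma> \<in> delaunay (insert 0 QQ)" using sub ne unfolding delaunay_def by blast
    then show False using assms(2) by simp
  qed
qed

lemma part2: "\<exists>\<sigma>. delaunay QQ - delaunay (insert 0 QQ) = {\<sigma>} \<and> card \<sigma> = CARD('n) + 1
              \<and> del_weight QQ \<sigma> = 1"
proof (rule exI[of _ P], intro conjI)
  show "delaunay QQ - delaunay (insert 0 QQ) = {P}"
  proof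
    show "delaunay QQ - delaunay (insert 0 QQ) \<subseteq> {P}"
    proof
      fix \<sigma> assume "\<sigma> \<in> delaunay QQ - delaunay (insert 0 QQ)"
      then show "\<sigma> \<in> {P}" using D2[of \<sigma>] by simp
    qed
    show "{P} \<subseteq> delaunay QQ - delaunay (insert 0 QQ)" by (simp add: PinDQ PnotDX)
  qed
  show "card P = CARD('n) + 1" by (rule cardP)
  have "1 \<in> wset QQ P"
  proof (rule wsetI)
    fix x assume x: "x \<in> P"
    have "0 \<in> voronoi QQ x" using zero_vor[OF x] .
    moreover have "dist x 0 = 1" using norm1[OF x] by simp
    ultimately show "dist x 0 \<le> 1 \<and> 0 \<in> voronoi QQ x" by simp
  qed
  moreover have "1 \<le> s" if s: "s \<in> wset QQ P" for s
  proof -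
    obtain y where y: "\<And>x. x \<in> P \<Longrightarrow> dist x y \<le> s \<and> y \<in> voronoi QQ x"
      using wsetE[OF s] by blast
    have "P \<noteq> {}" using cardP by auto
    then obtain p1 where p1: "p1 \<in> P" by blast
    have c: "y \<bullet> p = y \<bullet> p1" if p: "p \<in> P" for p
    proof -
      have "p1 \<in> QQ" "p \<in> QQ" using p1 p by (auto simp: QQ_def)
      then have "GG y p \<le> GG y p1" "GG y p1 \<le> GG y p" using y[OF p] y[OF p1] unfolding vorG by blast+
      then show ?thesis using Gp[OF p, of y] Gp[OF p1, of y] by simp
    qed
    have "(\<Sum>p\<in>P. y \<bullet> p) = (\<Sum>p\<in>P. y \<bullet> p1)" using c by (intro sum.cong) auto
    then have z: "y \<bullet> p1 = 0" using sumip cardP by simp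
    have eq: "dist p1 y ^ 2 = y \<bullet> y + 1"
      unfolding dist_norm power2_norm_eq_inner
      using z nrm[OF p1] by (simp add: inner_diff_left inner_diff_right inner_commute)
    have "1 \<le> y \<bullet> y + 1" by simp
    then have "1 \<le> dist p1 y ^ 2" unfolding eq .
    then have "1 \<le> dist p1 y" using power2_le_imp_le[of 1 "dist p1 y"] by simp
    then show ?thesis using y[OF p1] by simp
  qed
  ultimately show "del_weight QQ P = 1" unfolding dw by (intro cInf_eq_minimum)
qed

lemma circ:
  assumes p: "p \<in> P"
  shows "circumcenter (P - {p}) = (-(1/real CARD('n))) *\<^sub>R p"
proof -
  define F where "F = P - {p}"
  define c0 where "c0 = (-(1/real CARD('n))) *\<^sub>R p"
  have dpos: "real CARD('n) > 0" using dd2 by simp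
  have finF: "finite F" using fin by (simp add: F_def)
  have cardF: "card F = CARD('n)" using cardrem[OF p] by (simp add: F_def)
  have h: "p + (\<Sum>v\<in>F. v) = 0" using sum.remove[OF fin p, of "\<lambda>v. v"] sum0 by (simp add: F_def)
  have sumF: "(\<Sum>v\<in>F. v) = -p"
  proof -
    have "(\<Sum>v\<in>F. v) = (p + (\<Sum>v\<in>F. v)) - p" by simp
    also have "\<dots> = -p" using h by simp
    finally show ?thesis .
  qed
  have hull: "c0 \<in> affine hull F"
    unfolding affine_hull_finite[OF finF] mem_Collect_eq
  proof (rule exI[of _ "\<lambda>_. 1/real CARD('n)"], rule conjI)
    show "(\<Sum>v\<in>F. 1/real CARD('n)) = 1" using cardF dpos by simp
    have "(\<Sum>v\<in>F. (1/real CARD('n)) *\<^sub>R v) = (1/real CARD('n)) *\<^sub>R (\<Sum>v\<in>F. v)"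
      by (simp add: scaleR_sum_right)
    also have "\<dots> = c0" using sumF by (simp add: c0_def)
    finally show "(\<Sum>v\<in>F. (1/real CARD('n)) *\<^sub>R v) = c0" .
  qed
  have ipF: "p \<bullet> x = -1/real CARD('n)" if x: "x \<in> F" for x
    using ip[OF p, of x] x by (auto simp: F_def)
  have xF: "x \<in> F \<Longrightarrow> x \<in> P" for x by (simp add: F_def)
  have c0c0: "c0 \<bullet> c0 = 1/(real CARD('n))^2" by (simp add: c0_def nrm[OF p] power2_eq_square)
  have c0x: "c0 \<bullet> x = 1/(real CARD('n))^2" if x: "x \<in> F" for x
    using ipF[OF x] by (simp add: c0_def power2_eq_square)
  have dist0: "dist c0 x = sqrt (1 - 1/(real CARD('n))^2)" if x: "x \<in> F" for x
  proof -
    have e: "(c0 - x) \<bullet> (c0 - x) = c0 \<bullet> c0 - 2*(c0 \<bullet> x) + x \<bullet> x"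
      by (simp add: inner_diff_left inner_diff_right inner_commute)
    have "(c0 - x) \<bullet> (c0 - x) = 1 - 1/(real CARD('n))^2"
      unfolding e c0c0 c0x[OF x] nrm[OF xF[OF x]] by simp
    then show ?thesis by (simp add: dist_norm norm_eq_sqrt_inner)
  qed
  have uniq: "c = c0" if c: "c \<in> affine hull F \<and> (\<exists>r. \<forall>x\<in>F. dist c x = r)" for c
  proof -
    obtain r where r: "\<And>x. x \<in> F \<Longrightarrow> dist c x = r" using c by blast
    have cx: "c \<bullet> x = (c \<bullet> c + 1 - r^2)/2" if x: "x \<in> F" for x
    proof -
      have "r = norm (c - x)" using r[OF x] by (simp add: dist_norm)
      then have "r^2 = (c - x) \<bullet> (c - x)" by (simp add: power2_norm_eq_inner)
      also have "\<dots> = c \<bullet> c - 2*(c \<bullet> x) + x \<bullet> x"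
        by (simp add: inner_diff_left inner_diff_right inner_commute)
      finally show ?thesis using nrm[OF xF[OF x]] by simp
    qed
    define v where "v = c - c0"
    define K where "K = (c \<bullet> c + 1 - r^2)/2 - 1/(real CARD('n))^2"
    have vx: "v \<bullet> x = K" if x: "x \<in> F" for x
      using cx[OF x] c0x[OF x] by (simp add: v_def K_def inner_diff_left)
    have "v \<bullet> c = K" using hull_const[of F v K c, OF vx] c by blast
    moreover have "v \<bullet> c0 = K" using hull_const[of F v K c0, OF vx] hull by blast
    ultimately have "v \<bullet> v = 0" by (simp add: v_def inner_diff_right)
    then show ?thesis by (simp add: v_def)
  qed
  show ?thesis
    unfolding circumcenter_def F_def[symmetric] c0_def[symmetric]
  proof (rule the_equality)
    have "\<forall>x\<in>F. dist c0 x = sqrt (1 - 1/(real CARD('n))^2)" using dist0 by simp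
    then have "\<exists>r. \<forall>x\<in>F. dist c0 x = r" by (rule exI)
    then show "c0 \<in> affine hull F \<and> (\<exists>r. \<forall>x\<in>F. dist c0 x = r)" using hull by (rule conjI[rotated])
  next
    fix c assume "c \<in> affine hull F \<and> (\<exists>r. \<forall>x\<in>F. dist c x = r)"
    then show "c = c0" by (rule uniq)
  qed
qed

lemma ray: "p \<in> P \<Longrightarrow> ray_point \<rho> P p = (-\<rho>) *\<^sub>R p"
proof -
  assume p: "p \<in> P"
  have dpos: "real CARD('n) > 0" using dd2 by simp
  have n: "norm ((-(1/real CARD('n))) *\<^sub>R p) = 1/real CARD('n)" using norm1[OF p] dpos by simp
  have e: "\<rho> / (1/real CARD('n)) * (-(1/real CARD('n))) = -\<rho>" using dpos by (simp add: field_simps)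
  show ?thesis unfolding ray_point_def Let_def circ[OF p] n scaleR_scaleR e ..
qed

lemma QQ_eq: "P \<union> ray_point \<rho> P ` P = QQ"
proof -
  have "ray_point \<rho> P ` P = (\<lambda>p. (-\<rho>) *\<^sub>R p) ` P" by (rule image_cong) (simp_all add: ray)
  then show ?thesis unfolding QQ_def by simp
qed

end

lemma reg_props:
  fixes P :: "(real^'n) set"
  assumes reg: "regular_simplex_unit_sphere P" and d2: "CARD('n) \<ge> 2"
  shows "finite P \<and> card P = CARD('n) + 1 \<and> (\<forall>p\<in>P. p \<bullet> p = 1) \<and>
    (\<forall>p\<in>P. \<forall>p'\<in>P. p \<noteq> p' \<longrightarrow> p \<bullet> p' = -1/real CARD('n)) \<and> (\<Sum>p\<in>P. p) = 0"
proof -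
  have R: "card P = CARD('n) + 1 \<and> \<not> affine_dependent P \<and> P \<subseteq> sphere 0 1 \<and>
     (\<exists>a. \<forall>x\<in>P. \<forall>y\<in>P. x \<noteq> y \<longrightarrow> dist x y = a)"
    using reg unfolding regular_simplex_unit_sphere_def .
  have cP: "card P = CARD('n) + 1" using R by (rule conjunct1)
  have ind: "\<not> affine_dependent P" using R[THEN conjunct2] by (rule conjunct1)
  have sph: "P \<subseteq> sphere 0 1" using R[THEN conjunct2, THEN conjunct2] by (rule conjunct1)
  have ex: "\<exists>a. \<forall>x\<in>P. \<forall>y\<in>P. x \<noteq> y \<longrightarrow> dist x y = a"
    using R[THEN conjunct2, THEN conjunct2] by (rule conjunct2)
  from ex obtain a where a0: "\<forall>x\<in>P. \<forall>y\<in>P. x \<noteq> y \<longrightarrow> dist x y = a" by (rule exE)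
  have a: "dist x y = a" if "x\<in>P" "y\<in>P" "x \<noteq> y" for x y using a0 that by blast
  have fin: "finite P" using cP by (intro card_ge_0_finite) simp
  have nrm: "p \<bullet> p = 1" if p: "p \<in> P" for p
  proof -
    have "norm p = 1" using sph p by auto
    then show ?thesis by (simp add: norm_eq_1)
  qed
  have dpos: "real CARD('n) > 0" by simp
  define c where "c = 1 - a^2/2"
  have ipc: "x \<bullet> y = c" if x: "x \<in> P" and y: "y \<in> P" and xy: "x \<noteq> y" for x y
  proof -
    have "a = norm (x - y)" using a[OF x y xy] by (simp add: dist_norm)
    then have "a^2 = (x - y) \<bullet> (x - y)" by (simp add: power2_norm_eq_inner)
    also have "\<dots> = x \<bullet> x - 2*(x \<bullet> y) + y \<bullet> y"
      by (simp add: inner_diff_left inner_diff_right inner_commute)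
    finally have "a^2 = x \<bullet> x - 2*(x \<bullet> y) + y \<bullet> y" .
    then have "a^2 = 2 - 2*(x \<bullet> y)" using nrm[OF x] nrm[OF y] by simp
    then show ?thesis unfolding c_def by (simp add: field_simps)
  qed
  define g where "g = (\<Sum>p\<in>P. p)"
  have gp: "g \<bullet> p = 1 + real CARD('n) * c" if p: "p \<in> P" for p
  proof -
    have e1: "g \<bullet> p = (\<Sum>q\<in>P. q \<bullet> p)" by (simp add: g_def inner_sum_left)
    have e2: "(\<Sum>q\<in>P. q \<bullet> p) = p \<bullet> p + (\<Sum>q\<in>P-{p}. q \<bullet> p)" by (rule sum.remove[OF fin p])
    have e3: "(\<Sum>q\<in>P-{p}. q \<bullet> p) = (\<Sum>q\<in>P-{p}. c)" using ipc p by (intro sum.cong) auto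
    have e4: "(\<Sum>q\<in>P-{p}. c) = real CARD('n) * c" using cP fin p by simp
    show ?thesis unfolding e1 e2 e3 e4 nrm[OF p] ..
  qed
  have "aff_dim P = int CARD('n)" using aff_dim_affine_independent[OF ind] cP by simp
  then have full: "affine hull P = UNIV" using aff_dim_eq_full[of P] by simp
  have gz: "g \<bullet> z = 1 + real CARD('n) * c" for z
    using hull_const[of P g "1 + real CARD('n) * c" z, OF gp] full by blast
  have k0: "1 + real CARD('n) * c = 0" using gz[of 0] by simp
  have "g \<bullet> g = 0" using gz[of g] k0 by simp
  then have g0: "g = 0" by simp
  have cv: "c = -1/real CARD('n)" using k0 dpos by (simp add: field_simps)
  have s0: "(\<Sum>p\<in>P. p) = 0" using g0 by (simp add: g_def)
  have ip': "\<forall>p\<in>P. \<forall>p'\<in>P. p \<noteq> p' \<longrightarrow> p \<bullet> p' = -1/real CARD('n)" using ipc cv by blast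
  have n': "\<forall>p\<in>P. p \<bullet> p = 1" using nrm by blast
  show ?thesis using fin cP n' ip' s0 by simp
qed

theorem lemma3p19:
  fixes P :: "(real ^ 'n) set" and \<rho> :: real
  assumes "CARD('n) \<ge> 2"
    and "regular_simplex_unit_sphere P"
    and "\<rho> > 20 * real CARD('n)"
  defines "Q \<equiv> P \<union> ray_point \<rho> P ` P"
  shows "card (delaunay (insert 0 Q) - delaunay Q) \<le> 2 ^ (CARD('n) + 1)
       \<and> Max (del_weight (insert 0 Q) ` {\<sigma> \<in> delaunay (insert 0 Q) - delaunay Q. card \<sigma> \<ge> 2})
           = real CARD('n) / 2
       \<and> Min (del_weight (insert 0 Q) ` {\<sigma> \<in> delaunay (insert 0 Q) - delaunay Q. card \<sigma> \<ge> 2})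
           = 1 / 2
       \<and> (\<exists>\<sigma>. delaunay Q - delaunay (insert 0 Q) = {\<sigma>} \<and> card \<sigma> = CARD('n) + 1
              \<and> del_weight Q \<sigma> = 1)"
proof -
  have H: "finite P \<and> card P = CARD('n) + 1 \<and> (\<forall>p\<in>P. p \<bullet> p = 1) \<and>
    (\<forall>p\<in>P. \<forall>p'\<in>P. p \<noteq> p' \<longrightarrow> p \<bullet> p' = -1/real CARD('n)) \<and> (\<Sum>p\<in>P. p) = 0"
    by (rule reg_props[OF assms(2) assms(1)])
  interpret cfg P \<rho>
    by unfold_locales (use H assms(1,3) in auto)
  have Qe: "Q = QQ" unfolding Q_def by (rule QQ_eq)
  have c1: "card (delaunay (insert 0 Q) - delaunay Q) \<le> 2 ^ (CARD('n) + 1)"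
    unfolding Qe by (rule card_part)
  have c2: "Max (del_weight (insert 0 Q) ` {\<sigma> \<in> delaunay (insert 0 Q) - delaunay Q. card \<sigma> \<ge> 2})
           = real CARD('n) / 2"
    unfolding Qe by (rule weights[THEN conjunct1])
  have c3: "Min (del_weight (insert 0 Q) ` {\<sigma> \<in> delaunay (insert 0 Q) - delaunay Q. card \<sigma> \<ge> 2})
           = 1 / 2"
    unfolding Qe by (rule weights[THEN conjunct2])
  have c4: "\<exists>\<sigma>. delaunay Q - delaunay (insert 0 Q) = {\<sigma>} \<and> card \<sigma> = CARD('n) + 1
              \<and> del_weight Q \<sigma> = 1"
    unfolding Qe by (rule part2)
  show ?thesis using c1 c2 c3 c4 by (intro conjI)
qed

end
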